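(* Under the hypotheses and notation of the Main Theorem (a formally integrable system $R_q\subset J_q(E)$ whose symbol $g_{q+s}$ is $2$-acyclic, ${\cal D}=\Phi\circ j_q:E\to F_0$, and for $t\ge s+1$ the symbols $h_t=\mathrm{im}(\sigma_t(\Phi))\subseteq S_tT^*\otimes F_0$, where $h_{s+1}$ is the symbol of $B_{s+1}=\mathrm{im}(\rho_{s+1}(\Phi))$ and $h_{s+1+r}$ is its $r$-th prolongation), let $s'\ge0$ be an integer. If the symbol $g_{q+s+s'}$ is $3$-acyclic, then the symbol $h_{s+s'+1}$ is $2$-acyclic.
   Context: $\sigma_t(\Phi):S_{q+t}T^*\otimes E\to S_tT^*\otimes F_0$ is the symbol-level prolongation of $\Phi$. The Spencer map $\delta$ on $\wedge^sT^*\otimes S_{p+1}T^*\otimes F$ is $(\delta\omega)_\mu=dx^i\wedge\omega_{\mu+1_i}$, restricting to any symbol and its prolongations; a symbol $h$ is $k$-acyclic if the $\delta$-cohomology of all its prolongations vanishes at $\wedge^jT^*\otimes(\cdot)$ for $1\le j\le k$. (Applied via the Main Theorem, this means the compatibility conditions of ${\cal D}_1$ are then generated by an operator of order $s'+1$.) *)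

theory Defs
  imports Main
begin

text \<open>Coordinate model of the symbol-level (multilinear algebra) setting.
  n = dim of the base (T* has basis dx^0..dx^(n-1)), m = fibre dim of E,
  m0 = fibre dim of F_0, coefficients in a field.
  An element of S_p T* (x) E is a function omega mu k (k < m).
  An element of wedge^j T* (x) S_p T* (x) E is a function omega I mu k
  with I a j-element subset of {..<n} (the sorted index dx^I).\<close>

definition mi :: "nat \<Rightarrow> nat \<Rightarrow> (nat \<Rightarrow> nat) set" where
  "mi n p = {mu. (\<forall>i\<ge>n. mu i = 0) \<and> sum mu {..<n} = p}"

definition SE :: "nat \<Rightarrow> nat \<Rightarrow> nat \<Rightarrow> ((nat \<Rightarrow> nat) \<Rightarrow> nat \<Rightarrow> 'a::field) set" where
  "SE n m p = {w. \<forall>mu k. (mu \<notin> mi n p \<or> m \<le> k) \<longrightarrow> w mu k = 0}"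

definition WSE :: "nat \<Rightarrow> nat \<Rightarrow> nat \<Rightarrow> nat \<Rightarrow>
    (nat set \<Rightarrow> (nat \<Rightarrow> nat) \<Rightarrow> nat \<Rightarrow> 'a::field) set" where
  "WSE n m j p = {w. \<forall>I mu k. (\<not> (I \<subseteq> {..<n} \<and> card I = j) \<or> mu \<notin> mi n p \<or> m \<le> k)
                        \<longrightarrow> w I mu k = 0}"

definition spencer :: "(nat set \<Rightarrow> (nat \<Rightarrow> nat) \<Rightarrow> nat \<Rightarrow> 'a::field) \<Rightarrow>
    (nat set \<Rightarrow> (nat \<Rightarrow> nat) \<Rightarrow> nat \<Rightarrow> 'a)" where
  "spencer w = (\<lambda>J mu k. \<Sum>i\<in>J. (-1) ^ card {l\<in>J. l < i} * w (J - {i}) (mu(i := Suc (mu i))) k)"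

definition prol :: "nat \<Rightarrow> nat \<Rightarrow> ((nat \<Rightarrow> nat) \<Rightarrow> nat \<Rightarrow> 'a::field) set \<Rightarrow> nat \<Rightarrow> nat \<Rightarrow>
    ((nat \<Rightarrow> nat) \<Rightarrow> nat \<Rightarrow> 'a) set" where
  "prol n m g p r = {w \<in> SE n m (p + r). \<forall>nu \<in> mi n r. (\<lambda>mu k. w (\<lambda>i. mu i + nu i) k) \<in> g}"

definition WG :: "nat \<Rightarrow> nat \<Rightarrow> ((nat \<Rightarrow> nat) \<Rightarrow> nat \<Rightarrow> 'a::field) set \<Rightarrow> nat \<Rightarrow> nat \<Rightarrow> nat \<Rightarrow>
    (nat set \<Rightarrow> (nat \<Rightarrow> nat) \<Rightarrow> nat \<Rightarrow> 'a) set" where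
  "WG n m g p r j = {w \<in> WSE n m j (p + r). \<forall>I. I \<subseteq> {..<n} \<and> card I = j \<longrightarrow> w I \<in> prol n m g p r}"

definition k_acyclic :: "nat \<Rightarrow> nat \<Rightarrow> nat \<Rightarrow> ((nat \<Rightarrow> nat) \<Rightarrow> nat \<Rightarrow> 'a::field) set \<Rightarrow> nat \<Rightarrow> bool" where
  "k_acyclic n m p g k \<longleftrightarrow>
     (\<forall>r j w. 1 \<le> j \<and> j \<le> k \<and> w \<in> WG n m g p r j \<and> spencer w = (\<lambda>_ _ _. 0)
        \<longrightarrow> (\<exists>eta \<in> WG n m g p (Suc r) (j - 1). spencer eta = w))"

text \<open>sigma_t(Phi) : S_(q+t) T* (x) E -> S_t T* (x) F_0, where the symbol
  sigma(Phi) : S_q T* (x) E -> F_0 has coefficient matrix A tau mu k.\<close>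
definition sigmat :: "nat \<Rightarrow> nat \<Rightarrow> nat \<Rightarrow> nat \<Rightarrow> (nat \<Rightarrow> (nat \<Rightarrow> nat) \<Rightarrow> nat \<Rightarrow> 'a::field) \<Rightarrow> nat \<Rightarrow>
    ((nat \<Rightarrow> nat) \<Rightarrow> nat \<Rightarrow> 'a) \<Rightarrow> ((nat \<Rightarrow> nat) \<Rightarrow> nat \<Rightarrow> 'a)" where
  "sigmat n m m0 q A t w = (\<lambda>nu tau. if nu \<in> mi n t \<and> tau < m0
      then (\<Sum>mu\<in>mi n q. \<Sum>k<m. A tau mu k * w (\<lambda>i. mu i + nu i) k) else 0)"

text \<open>g_q = ker sigma(Phi) (symbol of R_q), h_t = im sigma_t(Phi).\<close>
definition gsym :: "nat \<Rightarrow> nat \<Rightarrow> nat \<Rightarrow> nat \<Rightarrow> (nat \<Rightarrow> (nat \<Rightarrow> nat) \<Rightarrow> nat \<Rightarrow> 'a::field) \<Rightarrow>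
    ((nat \<Rightarrow> nat) \<Rightarrow> nat \<Rightarrow> 'a) set" where
  "gsym n m m0 q A = {w \<in> SE n m q. sigmat n m m0 q A 0 w = (\<lambda>_ _. 0)}"

definition hsym :: "nat \<Rightarrow> nat \<Rightarrow> nat \<Rightarrow> nat \<Rightarrow> (nat \<Rightarrow> (nat \<Rightarrow> nat) \<Rightarrow> nat \<Rightarrow> 'a::field) \<Rightarrow> nat \<Rightarrow>
    ((nat \<Rightarrow> nat) \<Rightarrow> nat \<Rightarrow> 'a) set" where
  "hsym n m m0 q A t = sigmat n m m0 q A t ` SE n m (q + t)"

end

theory Submission
  imports Defs
begin


lemma sum_upd_Suc:
  fixes nu :: "nat \<Rightarrow> nat" and i n :: nat
  assumes "i < n"
  shows "sum (nu(i := Suc (nu i))) {..<n} = Suc (sum nu {..<n})"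
proof -
  have rem: "\<And>f. sum (f::nat\<Rightarrow>nat) {..<n} = f i + sum f ({..<n} - {i})"
    by (rule sum.remove) (use assms in auto)
  have e: "sum (nu(i := Suc (nu i))) ({..<n} - {i}) = sum nu ({..<n} - {i})"
    by (rule sum.cong) auto
  show ?thesis using rem[of "nu(i := Suc (nu i))"] rem[of nu] e by simp
qed

lemma mi_sh: "nu(i := Suc (nu i)) \<in> mi n (Suc p) \<longleftrightarrow> i < n \<and> nu \<in> mi n p"
proof
  assume h: "nu(i := Suc (nu i)) \<in> mi n (Suc p)"
  have "i < n"
  proof (rule ccontr)
    assume "\<not> i < n"
    moreover have "\<forall>j\<ge>n. (nu(i := Suc (nu i))) j = 0" using h by (simp add: mi_def)
    ultimately have "(nu(i := Suc (nu i))) i = 0" by (auto dest: spec[of _ i])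
    then show False by simp
  qed
  moreover have "\<forall>j\<ge>n. nu j = 0" using h \<open>i<n\<close> by (auto simp: mi_def)
  moreover have "sum nu {..<n} = p" using h sum_upd_Suc[OF \<open>i<n\<close>, of nu] by (simp add: mi_def)
  ultimately show "i < n \<and> nu \<in> mi n p" by (simp add: mi_def)
next
  assume h: "i < n \<and> nu \<in> mi n p"
  then show "nu(i := Suc (nu i)) \<in> mi n (Suc p)" using sum_upd_Suc[of i n nu] by (auto simp: mi_def)
qed

lemma mi0: "mi n 0 = {\<lambda>_. 0}"
  by (auto simp: mi_def fun_eq_iff) (metis not_le lessThan_iff)

lemma mi_exists_pos:
  assumes "rho \<in> mi n (Suc p)" shows "\<exists>c<n. 0 < rho c"
proof (rule ccontr)
  assume "\<not> ?thesis"
  then have "sum rho {..<n} = 0" by (auto intro: sum.neutral)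
  then show False using assms by (simp add: mi_def)
qed

lemma sh_dec: "0 < rho c \<Longrightarrow> (rho(c := rho c - 1))(c := Suc ((rho(c := rho c - 1)) c)) = rho"
  by (auto simp: fun_eq_iff)

lemma mi_dec:
  assumes "rho \<in> mi n (Suc p)" "0 < rho c"
  shows "rho(c := rho c - 1) \<in> mi n p"
  using mi_sh[of "rho(c := rho c - 1)" c n p] sh_dec[of rho c, OF assms(2)] assms(1) by simp

lemma mi_add: "a \<in> mi n p \<Longrightarrow> b \<in> mi n r \<Longrightarrow> (\<lambda>i. a i + b i) \<in> mi n (p + r)"
  by (auto simp: mi_def sum.distrib)

lemma mi_add_cancel:
  assumes "(\<lambda>i. a i + b i) \<in> mi n (p + r)" "b \<in> mi n r"
  shows "a \<in> mi n p"
  using assms by (auto simp: mi_def sum.distrib)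

lemma mi_decomp:
  "rho \<in> mi n (a + b) \<Longrightarrow> \<exists>v1\<in>mi n a. \<exists>v2\<in>mi n b. rho = (\<lambda>i. v1 i + v2 i)"
proof (induction b arbitrary: rho)
  case 0
  then show ?case by (auto simp: mi0)
next
  case (Suc b)
  then obtain c where c: "c < n" "0 < rho c" using mi_exists_pos[of rho n "a+b"] by auto
  have "rho(c := rho c - 1) \<in> mi n (a + b)" using mi_dec Suc.prems c by simp
  then obtain v1 v2 where v: "v1 \<in> mi n a" "v2 \<in> mi n b" "rho(c := rho c - 1) = (\<lambda>i. v1 i + v2 i)"
    using Suc.IH by blast
  have "v2(c := Suc (v2 c)) \<in> mi n (Suc b)" using mi_sh v c by auto
  moreover have "rho = (\<lambda>i. v1 i + (v2(c := Suc (v2 c))) i)"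
  proof
    fix i show "rho i = v1 i + (v2(c := Suc (v2 c))) i"
      using fun_cong[OF v(3), of i] c by (cases "i = c") auto
  qed
  ultimately show ?case using v by blast
qed

lemma mi_sh_ge: "n \<le> i \<Longrightarrow> nu(i := Suc (nu i)) \<notin> mi n p"
  by (auto simp: mi_def)



lemma spencer_1: "spencer w {a} mu k = w {} (mu(a := Suc (mu a))) k"
proof -
  have c: "{l \<in> {a}. l < a} = {}" by auto
  have s: "\<And>f::nat\<Rightarrow>'a. sum f {a} = f a" by simp
  show ?thesis unfolding spencer_def s c Diff_cancel by simp
qed

lemma spencer_2:
  assumes "a < b"
  shows "spencer w {a,b} mu k = w {b} (mu(a := Suc (mu a))) k - w {a} (mu(b := Suc (mu b))) k"
proof -
  define f where "f = (\<lambda>i. (-1::'a) ^ card {l\<in>{a,b}. l < i} * w ({a,b} - {i}) (mu(i := Suc (mu i))) k)"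
  have "spencer w {a,b} mu k = sum f {a,b}" by (simp add: spencer_def f_def)
  also have "\<dots> = f a + f b" using assms by simp
  also have c1: "{l \<in> {a,b}. l < a} = {}" using assms by auto
  have c2: "{l \<in> {a,b}. l < b} = {a}" using assms by auto
  have d: "{a,b} - {a} = {b}" "{a,b} - {b} = {a}" using assms by auto
  have "f a + f b = w {b} (mu(a := Suc (mu a))) k - w {a} (mu(b := Suc (mu b))) k"
    unfolding f_def c1 c2 d by simp
  finally show ?thesis .
qed

lemma spencer_3:
  assumes "a < b" "b < c"
  shows "spencer w {a,b,c} mu k = w {b,c} (mu(a := Suc (mu a))) k - w {a,c} (mu(b := Suc (mu b))) k
     + w {a,b} (mu(c := Suc (mu c))) k"
proof -
  define f where "f = (\<lambda>i. (-1::'a) ^ card {l\<in>{a,b,c}. l < i} * w ({a,b,c} - {i}) (mu(i := Suc (mu i))) k)"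
  have "spencer w {a,b,c} mu k = sum f {a,b,c}" by (simp add: spencer_def f_def)
  also have "\<dots> = f a + f b + f c" using assms by simp
  finally have e: "spencer w {a,b,c} mu k = f a + f b + f c" .
  have c1: "{l \<in> {a,b,c}. l < a} = {}" using assms by auto
  have c2: "{l \<in> {a,b,c}. l < b} = {a}" using assms by auto
  have c3: "{l \<in> {a,b,c}. l < c} = {a,b}" using assms by auto
  have d: "{a,b,c} - {a} = {b,c}" "{a,b,c} - {b} = {a,c}" "{a,b,c} - {c} = {a,b}" using assms by auto
  have "f a + f b + f c = w {b,c} (mu(a := Suc (mu a))) k - w {a,c} (mu(b := Suc (mu b))) k
     + w {a,b} (mu(c := Suc (mu c))) k"
    unfolding f_def c1 c2 c3 d using assms by simp
  then show ?thesis using e by simp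
qed

lemma spencer_zero_card:
  assumes "\<And>I mu k. w I mu k \<noteq> 0 \<Longrightarrow> finite I \<and> card I = j"
    and "\<not> (finite J \<and> card J = Suc j)"
  shows "spencer w J mu k = 0"
proof (cases "finite J")
  case False then show ?thesis by (simp add: spencer_def)
next
  case True
  have "\<And>i. i \<in> J \<Longrightarrow> w (J - {i}) (mu(i := Suc (mu i))) k = 0"
  proof (rule ccontr)
    fix i assume i: "i \<in> J" and ne: "w (J - {i}) (mu(i := Suc (mu i))) k \<noteq> 0"
    then have "card (J - {i}) = j" using assms(1) by blast
    then have "card J = Suc j" using True i card_Suc_Diff1 by metis
    then show False using assms(2) True by simp
  qed
  then show ?thesis by (simp add: spencer_def)
qed

lemma spencer_diff:
  "spencer (\<lambda>I mu k. a I mu k - b I mu k) = (\<lambda>J mu k. spencer a J mu k - spencer b J mu k)"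
  by (simp add: spencer_def fun_eq_iff sum_subtractf algebra_simps)

lemma WSE_comp: "w \<in> WSE n m j p \<Longrightarrow> w I \<in> SE n m p"
  by (auto simp: WSE_def SE_def)

lemma WSE_diff: "a \<in> WSE n m j p \<Longrightarrow> b \<in> WSE n m j p \<Longrightarrow> (\<lambda>I mu k. a I mu k - b I mu k) \<in> WSE n m j p"
  by (auto simp: WSE_def)

lemma spencer_WSE:
  assumes w: "w \<in> WSE n m j (Suc p)"
  shows "spencer w \<in> WSE n m (Suc j) p"
  unfolding WSE_def
proof (intro CollectI allI impI)
  fix J mu k
  assume h: "\<not> (J \<subseteq> {..<n} \<and> card J = Suc j) \<or> mu \<notin> mi n p \<or> m \<le> k"
  show "spencer w J mu k = 0"
  proof (cases "finite J")
    case False then show ?thesis by (simp add: spencer_def)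
  next
    case fin: True
    have "\<And>i. i \<in> J \<Longrightarrow> w (J - {i}) (mu(i := Suc (mu i))) k = 0"
    proof -
      fix i assume i: "i \<in> J"
      consider "card J \<noteq> Suc j" | "\<not> J \<subseteq> {..<n}" | "mu \<notin> mi n p" | "m \<le> k" using h by blast
      then show "w (J - {i}) (mu(i := Suc (mu i))) k = 0"
      proof cases
        case 1
        then have "card (J - {i}) \<noteq> j" using fin i card_Suc_Diff1 by metis
        then show ?thesis using w by (auto simp: WSE_def)
      next
        case 2
        then obtain x where x: "x \<in> J" "n \<le> x" by (meson lessThan_iff not_le subsetI)
        show ?thesis
        proof (cases "i = x")
          case True
          then have "mu(i := Suc (mu i)) \<notin> mi n (Suc p)" using mi_sh_ge x by simp
          then show ?thesis using w by (auto simp: WSE_def)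
        next
          case False
          then have "\<not> (J - {i}) \<subseteq> {..<n}" using x by auto
          then show ?thesis using w by (auto simp: WSE_def)
        qed
      next
        case 3
        then have "mu(i := Suc (mu i)) \<notin> mi n (Suc p)" using mi_sh by simp
        then show ?thesis using w by (auto simp: WSE_def)
      next
        case 4
        then show ?thesis using w by (auto simp: WSE_def)
      qed
    qed
    then show ?thesis by (simp add: spencer_def)
  qed
qed

lemma double_sum_antisym:
  fixes F :: "nat \<Rightarrow> nat \<Rightarrow> 'a::ab_group_add"
  assumes fin: "finite J" and anti: "\<And>i i'. i \<in> J \<Longrightarrow> i' \<in> J \<Longrightarrow> i < i' \<Longrightarrow> F i' i = - F i i'"
  shows "(\<Sum>i\<in>J. \<Sum>i'\<in>J - {i}. F i i') = 0"
proof -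
  have "(\<Sum>i\<in>J. \<Sum>i'\<in>J - {i}. F i i') = (\<Sum>i\<in>J. \<Sum>i'\<in>J. if i' \<noteq> i then F i i' else 0)"
  proof (rule sum.cong[OF refl])
    fix i assume "i \<in> J"
    have "{i' \<in> J. i' \<noteq> i} = J - {i}" by auto
    then show "(\<Sum>i'\<in>J - {i}. F i i') = (\<Sum>i'\<in>J. if i' \<noteq> i then F i i' else 0)"
      using sum.inter_filter[OF fin, of "F i" "\<lambda>i'. i' \<noteq> i"] by simp
  qed
  also have "\<dots> = (\<Sum>i\<in>J. \<Sum>i'\<in>J. (if i' < i then F i i' else 0) + (if i < i' then F i i' else 0))"
    by (intro sum.cong refl) auto
  also have "\<dots> = (\<Sum>i\<in>J. \<Sum>i'\<in>J. if i' < i then F i i' else 0) + (\<Sum>i\<in>J. \<Sum>i'\<in>J. if i < i' then F i i' else 0)"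
    by (simp add: sum.distrib)
  also have "(\<Sum>i\<in>J. \<Sum>i'\<in>J. if i < i' then F i i' else 0) = (\<Sum>i'\<in>J. \<Sum>i\<in>J. if i < i' then F i i' else 0)"
    by (rule sum.swap)
  also have "\<dots> = (\<Sum>i'\<in>J. \<Sum>i\<in>J. if i < i' then - F i' i else 0)"
    by (intro sum.cong refl) (use anti in auto)
  also have "\<dots> = - (\<Sum>i\<in>J. \<Sum>i'\<in>J. if i' < i then F i i' else 0)"
    by (simp add: sum_negf[symmetric] if_distrib cong: if_cong)
  finally show ?thesis by simp
qed

lemma spencer_spencer: "spencer (spencer w) = (\<lambda>_ _ _. 0)"
proof (intro ext)
  fix J mu k
  show "spencer (spencer w) J mu k = 0"
  proof (cases "finite J")
    case False then show ?thesis by (simp add: spencer_def)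
  next
    case fin: True
    define sg where "sg = (\<lambda>(K::nat set) (i::nat). ((-1::'a) ^ card {l\<in>K. l < i}))"
    define F where "F = (\<lambda>i i'. sg J i * sg (J - {i}) i' * w (J - {i} - {i'})
        ((mu(i := Suc (mu i)))(i' := Suc ((mu(i := Suc (mu i))) i'))) k)"
    have eq: "spencer (spencer w) J mu k = (\<Sum>i\<in>J. \<Sum>i'\<in>J - {i}. F i i')"
      unfolding spencer_def F_def sg_def by (simp add: sum_distrib_left mult.assoc)
    have anti: "F i' i = - F i i'" if i: "i \<in> J" "i' \<in> J" "i < i'" for i i'
    proof -
      have s1: "J - {i} - {i'} = J - {i'} - {i}" by auto
      have s2: "(mu(i := Suc (mu i)))(i' := Suc ((mu(i := Suc (mu i))) i')) =
                (mu(i' := Suc (mu i')))(i := Suc ((mu(i' := Suc (mu i'))) i))"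
        using i by (auto simp: fun_eq_iff)
      have "{l \<in> J. l < i'} = insert i {l \<in> J - {i}. l < i'}" using i by auto
      then have ca: "card {l \<in> J. l < i'} = Suc (card {l \<in> J - {i}. l < i'})"
        using fin by simp
      have cb: "{l \<in> J - {i'}. l < i} = {l \<in> J. l < i}" using i by auto
      show ?thesis unfolding F_def sg_def s1 s2 using ca cb by simp
    qed
    show ?thesis using eq double_sum_antisym[OF fin, of F] anti by simp
  qed
qed



definition SS :: "nat \<Rightarrow> nat \<Rightarrow> nat \<Rightarrow> (nat \<Rightarrow> (nat \<Rightarrow> nat) \<Rightarrow> nat \<Rightarrow> 'a::field) \<Rightarrow>
   ((nat\<Rightarrow>nat) \<Rightarrow> nat \<Rightarrow> 'a) \<Rightarrow> (nat\<Rightarrow>nat) \<Rightarrow> nat \<Rightarrow> 'a" where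
  "SS n m q A w rho tau = (\<Sum>mu\<in>mi n q. \<Sum>k<m. A tau mu k * w (\<lambda>i. mu i + rho i) k)"

lemma sig_SS: "sigmat n m m0 q A t w nu tau = (if nu \<in> mi n t \<and> tau < m0 then SS n m q A w nu tau else 0)"
  by (simp add: sigmat_def SS_def)

lemma SS_shf: "SS n m q A (\<lambda>mu k. w (\<lambda>i. mu i + nu i) k) rho tau = SS n m q A w (\<lambda>i. rho i + nu i) tau"
  by (simp add: SS_def add.assoc)

lemma sig_zero: "sigmat n m m0 q A t (\<lambda>_ _. 0) = (\<lambda>_ _. 0)"
  by (simp add: sigmat_def fun_eq_iff)

lemma sig_diff: "sigmat n m m0 q A t (\<lambda>mu k. a mu k - b mu k) =
   (\<lambda>nu tau. sigmat n m m0 q A t a nu tau - sigmat n m m0 q A t b nu tau)"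
  by (simp add: sigmat_def fun_eq_iff sum_subtractf right_diff_distrib)

lemma SE_shf: "w \<in> SE n m (p + r) \<Longrightarrow> nu \<in> mi n r \<Longrightarrow> (\<lambda>mu k. w (\<lambda>i. mu i + nu i) k) \<in> SE n m p"
  unfolding SE_def using mi_add_cancel by blast

lemma SE_sh: "w \<in> SE n m (Suc p) \<Longrightarrow> (\<lambda>mu k. w (mu(i := Suc (mu i))) k) \<in> SE n m p"
  unfolding SE_def using mi_sh by blast

lemma sig_SE: "sigmat n m m0 q A t w \<in> SE n m0 t"
  by (simp add: SE_def sigmat_def)

lemma G_gen:
  "prol n m {x \<in> SE n m (q + a). sigmat n m m0 q A a x = (\<lambda>_ _. 0)} (q + a) r =
   {x \<in> SE n m (q + a + r). sigmat n m m0 q A (a + r) x = (\<lambda>_ _. 0)}"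
proof (intro equalityI subsetI)
  fix x assume x: "x \<in> prol n m {x \<in> SE n m (q + a). sigmat n m m0 q A a x = (\<lambda>_ _. 0)} (q + a) r"
  then have xs: "x \<in> SE n m (q + a + r)" by (simp add: prol_def)
  have "sigmat n m m0 q A (a + r) x rho tau = 0" for rho tau
  proof (cases "rho \<in> mi n (a + r) \<and> tau < m0")
    case True
    then obtain v1 v2 where v: "v1 \<in> mi n a" "v2 \<in> mi n r" "rho = (\<lambda>i. v1 i + v2 i)"
      using mi_decomp by blast
    then have "sigmat n m m0 q A a (\<lambda>mu k. x (\<lambda>i. mu i + v2 i) k) = (\<lambda>_ _. 0)"
      using x by (simp add: prol_def)
    then have "sigmat n m m0 q A a (\<lambda>mu k. x (\<lambda>i. mu i + v2 i) k) v1 tau = 0" by simp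
    then have "SS n m q A x (\<lambda>i. v1 i + v2 i) tau = 0" using v True by (simp add: sig_SS SS_shf)
    then show ?thesis using True v(3) by (simp add: sig_SS)
  next
    case False then show ?thesis by (auto simp: sig_SS)
  qed
  then show "x \<in> {x \<in> SE n m (q + a + r). sigmat n m m0 q A (a + r) x = (\<lambda>_ _. 0)}"
    using xs by auto
next
  fix x assume x: "x \<in> {x \<in> SE n m (q + a + r). sigmat n m m0 q A (a + r) x = (\<lambda>_ _. 0)}"
  have "(\<lambda>mu k. x (\<lambda>i. mu i + nu i) k) \<in> SE n m (q + a) \<and>
        sigmat n m m0 q A a (\<lambda>mu k. x (\<lambda>i. mu i + nu i) k) = (\<lambda>_ _. 0)" if nu: "nu \<in> mi n r" for nu
  proof
    show "(\<lambda>mu k. x (\<lambda>i. mu i + nu i) k) \<in> SE n m (q + a)" using x nu SE_shf by auto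
    show "sigmat n m m0 q A a (\<lambda>mu k. x (\<lambda>i. mu i + nu i) k) = (\<lambda>_ _. 0)"
    proof (intro ext)
      fix rho tau
      show "sigmat n m m0 q A a (\<lambda>mu k. x (\<lambda>i. mu i + nu i) k) rho tau = 0"
      proof (cases "rho \<in> mi n a \<and> tau < m0")
        case True
        then have "(\<lambda>i. rho i + nu i) \<in> mi n (a + r)" using mi_add nu by blast
        moreover have "sigmat n m m0 q A (a + r) x (\<lambda>i. rho i + nu i) tau = 0" using x by simp
        ultimately have "SS n m q A x (\<lambda>i. rho i + nu i) tau = 0"
          using True by (simp add: sig_SS)
        then show ?thesis using True by (simp add: sig_SS SS_shf)
      next
        case False then show ?thesis by (auto simp: sig_SS)
      qed
    qed
  qed
  then show "x \<in> prol n m {x \<in> SE n m (q + a). sigmat n m m0 q A a x = (\<lambda>_ _. 0)} (q + a) r"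
    using x by (simp add: prol_def)
qed

lemma gsym_G: "gsym n m m0 q A = {x \<in> SE n m (q + 0). sigmat n m m0 q A 0 x = (\<lambda>_ _. 0)}"
  by (simp add: gsym_def)

lemma G2: "prol n m (prol n m (gsym n m m0 q A) q s) (q + s) r =
   {x \<in> SE n m (q + s + r). sigmat n m m0 q A (s + r) x = (\<lambda>_ _. 0)}"
proof -
  have "prol n m (gsym n m m0 q A) q s = {x \<in> SE n m (q + s). sigmat n m m0 q A s x = (\<lambda>_ _. 0)}"
    using G_gen[of n m q 0 m0 A s] by (simp add: gsym_def)
  then show ?thesis using G_gen[of n m q s m0 A r] by simp
qed



lemma SS_spencer:
  "SS n m q A (spencer u J) nu tau =
   (\<Sum>i\<in>J. (-1) ^ card {l\<in>J. l < i} * SS n m q A (u (J - {i})) (nu(i := Suc (nu i))) tau)"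
proof -
  have eqsh: "\<And>mu i. (\<lambda>j. mu j + nu j)(i := Suc (mu i + nu i)) = (\<lambda>j. mu j + (nu(i := Suc (nu i))) j)"
    by (auto simp: fun_eq_iff)
  define G where "G = (\<lambda>mu k i. A tau mu k * ((-1) ^ card {l\<in>J. l < i} * u (J - {i}) (\<lambda>j. mu j + (nu(i := Suc (nu i))) j) k))"
  have "SS n m q A (spencer u J) nu tau = (\<Sum>mu\<in>mi n q. \<Sum>k<m. \<Sum>i\<in>J. G mu k i)"
    unfolding SS_def spencer_def G_def by (simp add: eqsh sum_distrib_left)
  also have "\<dots> = (\<Sum>mu\<in>mi n q. \<Sum>i\<in>J. \<Sum>k<m. G mu k i)"
    by (rule sum.cong[OF refl], rule sum.swap)
  also have "\<dots> = (\<Sum>i\<in>J. \<Sum>mu\<in>mi n q. \<Sum>k<m. G mu k i)"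
    by (rule sum.swap)
  also have "\<dots> = (\<Sum>i\<in>J. (-1) ^ card {l\<in>J. l < i} * SS n m q A (u (J - {i})) (nu(i := Suc (nu i))) tau)"
    unfolding SS_def G_def by (simp add: sum_distrib_left mult.left_commute)
  finally show ?thesis .
qed

lemma SS_zero_ge:
  assumes "w \<in> SE n m t" "n \<le> i"
  shows "SS n m q A w (nu(i := Suc (nu i))) tau = 0"
proof -
  have "w (\<lambda>j. mu j + (nu(i := Suc (nu i))) j) k = 0" for mu k
  proof -
    have "(\<lambda>j. mu j + (nu(i := Suc (nu i))) j) \<notin> mi n t"
      using assms(2) by (auto simp: mi_def dest: spec[of _ i])
    then show ?thesis using assms(1) by (simp add: SE_def)
  qed
  then show ?thesis by (simp add: SS_def)
qed

lemma sig_spencer: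
  assumes u: "\<And>I. u I \<in> SE n m (q + Suc p)"
  shows "sigmat n m m0 q A p (spencer u J) = spencer (\<lambda>I. sigmat n m m0 q A (Suc p) (u I)) J"
proof (intro ext)
  fix nu tau
  have trm: "sigmat n m m0 q A (Suc p) (u I) (nu(i := Suc (nu i))) tau =
     (if nu \<in> mi n p \<and> tau < m0 then SS n m q A (u I) (nu(i := Suc (nu i))) tau else 0)" for I i
  proof (cases "i < n")
    case True then show ?thesis by (simp add: sig_SS mi_sh)
  next
    case False then show ?thesis using SS_zero_ge[OF u, of i] by (simp add: sig_SS mi_sh)
  qed
  show "sigmat n m m0 q A p (spencer u J) nu tau = spencer (\<lambda>I. sigmat n m m0 q A (Suc p) (u I)) J nu tau"
  proof -
    have R: "spencer (\<lambda>I. sigmat n m m0 q A (Suc p) (u I)) J nu tau =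
      (\<Sum>i\<in>J. (-1) ^ card {l\<in>J. l < i} * sigmat n m m0 q A (Suc p) (u (J - {i})) (nu(i := Suc (nu i))) tau)"
      by (simp only: spencer_def)
    show ?thesis
    proof (cases "nu \<in> mi n p \<and> tau < m0")
      case True
      then show ?thesis unfolding R trm using True by (simp only: sig_SS SS_spencer if_True simp_thms)
    next
      case False
      then show ?thesis unfolding R unfolding trm unfolding sig_SS if_not_P[OF False] by simp
    qed
  qed
qed

lemma sig_WSE_comp: "u \<in> WSE n m j t \<Longrightarrow> u I \<in> SE n m t"
  by (auto simp: WSE_def SE_def)



definition msupp :: "(nat \<Rightarrow> nat) \<Rightarrow> nat" where "msupp nu = (LEAST c. 0 < nu c)"

lemma msupp_pos: "0 < nu c \<Longrightarrow> 0 < nu (msupp nu)"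
  unfolding msupp_def by (rule LeastI)

lemma msupp_le: "0 < nu c \<Longrightarrow> msupp nu \<le> c"
  unfolding msupp_def by (rule Least_le)

lemma msupp_below: "d < msupp nu \<Longrightarrow> nu d = 0"
  unfolding msupp_def using not_less_Least by blast

lemma msupp_eq: "0 < nu c \<Longrightarrow> (\<And>d. d < c \<Longrightarrow> nu d = 0) \<Longrightarrow> msupp nu = c"
  by (metis msupp_le msupp_pos le_neq_implies_less not_less0 le_less)

lemma mi_has_pos: "nu \<in> mi n (Suc p) \<Longrightarrow> 0 < nu (msupp nu) \<and> msupp nu < n"
proof -
  assume h: "nu \<in> mi n (Suc p)"
  then obtain c where c: "c < n" "0 < nu c" using mi_exists_pos by blast
  then show ?thesis using msupp_pos msupp_le[of nu c] by force
qed

abbreviation dec :: "nat \<Rightarrow> (nat \<Rightarrow> nat) \<Rightarrow> (nat \<Rightarrow> nat)" where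
  "dec c nu \<equiv> nu(c := nu c - 1)"

lemma sh_dec_eq: "0 < nu c \<Longrightarrow> (dec c nu)(c := Suc (dec c nu c)) = nu"
  by (auto simp: fun_eq_iff)

lemma sh_dec_comm: "c \<noteq> a \<Longrightarrow> (dec c nu)(a := Suc ((dec c nu) a)) = dec c (nu(a := Suc (nu a)))"
  by (auto simp: fun_eq_iff)

lemma dec_sh: "dec a (nu(a := Suc (nu a))) = nu"
  by (auto simp: fun_eq_iff)

lemma poincare1:
  assumes u: "u \<in> WSE n m 1 p" and cl: "spencer u = (\<lambda>_ _ _. 0)"
  shows "\<exists>z \<in> WSE n m 0 (Suc p). spencer z = u"
proof -
  define z where "z = (\<lambda>(I::nat set) nu k. if I = {} \<and> nu \<in> mi n (Suc p)
      then u {msupp nu} (dec (msupp nu) nu) k else 0)"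
  have zW: "z \<in> WSE n m 0 (Suc p)"
    unfolding WSE_def
  proof (intro CollectI allI impI)
    fix I nu k
    assume h: "\<not> (I \<subseteq> {..<n} \<and> card I = 0) \<or> nu \<notin> mi n (Suc p) \<or> m \<le> k"
    show "z I nu k = 0"
    proof (cases "I = {} \<and> nu \<in> mi n (Suc p)")
      case True
      then have "m \<le> k" using h by auto
      then show ?thesis using u by (auto simp: z_def WSE_def)
    next
      case False then show ?thesis by (auto simp: z_def)
    qed
  qed
  have "spencer z J mu k = u J mu k" for J mu k
  proof (cases "finite J \<and> card J = 1")
    case True
    then obtain a where J: "J = {a}" by (metis One_nat_def card_1_singleton_iff)
    show ?thesis
    proof (cases "mu(a := Suc (mu a)) \<in> mi n (Suc p)")
      case inm: True
      then have an: "a < n" and mup: "mu \<in> mi n p" by (simp_all only: mi_sh)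
      define c where "c = msupp (mu(a := Suc (mu a)))"
      have "c \<le> a" unfolding c_def by (rule msupp_le) simp
      have val: "spencer z J mu k = u {c} (dec c (mu(a := Suc (mu a)))) k"
        unfolding J spencer_1 z_def c_def using inm by simp
      show ?thesis
      proof (cases "c = a")
        case True then show ?thesis using val J by (simp add: dec_sh)
      next
        case False
        then have ca: "c < a" using \<open>c \<le> a\<close> by simp
        have "0 < (mu(a := Suc (mu a))) c" unfolding c_def by (rule msupp_pos[of _ a]) simp
        then have pc: "0 < mu c" using ca by simp
        have "spencer u {c, a} (dec c mu) k = 0" using cl by simp
        then have "u {a} ((dec c mu)(c := Suc (dec c mu c))) k = u {c} ((dec c mu)(a := Suc ((dec c mu) a))) k"
          using spencer_2[OF ca, of u "dec c mu" k] by simp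
        then have "u {a} mu k = u {c} (dec c (mu(a := Suc (mu a)))) k"
          using sh_dec_eq[of mu c, OF pc] sh_dec_comm[of c a mu] ca by (metis less_irrefl)
        then show ?thesis using val J by simp
      qed
    next
      case False
      then have "spencer z J mu k = 0" unfolding J spencer_1 z_def by simp
      moreover have "u J mu k = 0"
      proof -
        have "a \<ge> n \<or> mu \<notin> mi n p" using False mi_sh by auto
        then show ?thesis using u J by (auto simp: WSE_def)
      qed
      ultimately show ?thesis by simp
    qed
  next
    case False
    have "spencer z J mu k = 0"
    proof (rule spencer_zero_card[where j=0])
      fix I nu k' assume "z I nu k' \<noteq> 0"
      then have "I = {}" by (simp add: z_def split: if_splits)
      then show "finite I \<and> card I = 0" by simp
    next
      show "\<not> (finite J \<and> card J = Suc 0)" using False by simp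
    qed
    moreover have "u J mu k = 0"
    proof -
      have "\<not> (J \<subseteq> {..<n} \<and> card J = 1)" using False finite_subset by (metis finite_lessThan)
      then show ?thesis using u by (simp add: WSE_def)
    qed
    ultimately show ?thesis by simp
  qed
  then have "spencer z = u" by (intro ext)
  then show ?thesis using zW by blast
qed



lemma poincare2:
  assumes v: "v \<in> WSE n m 2 p" and cl: "spencer v = (\<lambda>_ _ _. 0)"
  shows "\<exists>u \<in> WSE n m 1 (Suc p). spencer u = v"
proof -
  define u where "u = (\<lambda>(I::nat set) nu k. if (\<exists>b. I = {b}) \<and> nu \<in> mi n (Suc p) \<and> msupp nu < the_elem I
      then v {msupp nu, the_elem I} (dec (msupp nu) nu) k else 0)"
  have uval: "u {b} nu k = (if nu \<in> mi n (Suc p) \<and> msupp nu < b then v {msupp nu, b} (dec (msupp nu) nu) k else 0)"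
    for b nu k by (simp add: u_def)
  have unz: "\<exists>b. I = {b} \<and> b < n \<and> nu \<in> mi n (Suc p) \<and> k < m" if nz: "u I nu k \<noteq> 0" for I nu k
  proof -
    from nz obtain b where b: "I = {b}" by (auto simp: u_def split: if_splits)
    from nz have c: "nu \<in> mi n (Suc p)" "msupp nu < b" and vz: "v {msupp nu, b} (dec (msupp nu) nu) k \<noteq> 0"
      unfolding b uval by (simp_all split: if_splits)
    have "b < n"
    proof (rule ccontr)
      assume "\<not> b < n"
      then have "\<not> {msupp nu, b} \<subseteq> {..<n}" by auto
      then have "v {msupp nu, b} (dec (msupp nu) nu) k = 0" using v unfolding WSE_def by blast
      then show False using vz by simp
    qed
    moreover have "k < m"
    proof (rule ccontr)
      assume "\<not> k < m"
      then have "v {msupp nu, b} (dec (msupp nu) nu) k = 0" using v unfolding WSE_def by simp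
      then show False using vz by simp
    qed
    ultimately show ?thesis using b c by blast
  qed
  have uW: "u \<in> WSE n m 1 (Suc p)"
    unfolding WSE_def
  proof (intro CollectI allI impI)
    fix I nu k
    assume h: "\<not> (I \<subseteq> {..<n} \<and> card I = 1) \<or> nu \<notin> mi n (Suc p) \<or> m \<le> k"
    show "u I nu k = 0"
    proof (rule ccontr)
      assume "u I nu k \<noteq> 0"
      then obtain b where "I = {b}" "b < n" "nu \<in> mi n (Suc p)" "k < m" using unz by blast
      then show False using h by simp
    qed
  qed
  have "spencer u J mu k = v J mu k" for J mu k
  proof (cases "finite J \<and> card J = 2")
    case True
    then obtain x y where xy: "J = {x, y}" "x \<noteq> y" by (metis card_2_iff)
    obtain a b where J: "J = {a, b}" and ab: "a < b"
    proof (cases "x < y")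
      case True then show ?thesis using that xy by blast
    next
      case False then have "y < x" using xy by simp
      then show ?thesis using that xy by (metis insert_commute)
    qed
    have sp: "spencer u J mu k = u {b} (mu(a := Suc (mu a))) k - u {a} (mu(b := Suc (mu b))) k"
      unfolding J by (rule spencer_2[OF ab])
    show ?thesis
    proof (cases "b < n \<and> mu \<in> mi n p")
      case main: True
      then have an: "a < n" using ab by simp
      have ina: "mu(a := Suc (mu a)) \<in> mi n (Suc p)" using main an mi_sh by simp
      have inb: "mu(b := Suc (mu b)) \<in> mi n (Suc p)" using main mi_sh by simp
      show ?thesis
      proof (cases "\<exists>d<a. 0 < mu d")
        case True
        then obtain d where d: "d < a" "0 < mu d" by blast
        define c0 where "c0 = msupp mu"
        have c0d: "c0 \<le> d" unfolding c0_def using d(2) by (rule msupp_le)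
        have pc0: "0 < mu c0" unfolding c0_def using d(2) by (rule msupp_pos)
        have bel: "\<And>e. e < c0 \<Longrightarrow> mu e = 0" unfolding c0_def by (rule msupp_below)
        have c0a: "c0 < a" using c0d d by simp
        have ma: "msupp (mu(a := Suc (mu a))) = c0"
          by (rule msupp_eq) (use pc0 bel c0a in auto)
        have mb: "msupp (mu(b := Suc (mu b))) = c0"
          by (rule msupp_eq) (use pc0 bel c0a ab in auto)
        have ub: "u {b} (mu(a := Suc (mu a))) k = v {c0, b} (dec c0 (mu(a := Suc (mu a)))) k"
          unfolding uval ma using ina c0a ab by simp
        have ua: "u {a} (mu(b := Suc (mu b))) k = v {c0, a} (dec c0 (mu(b := Suc (mu b)))) k"
          unfolding uval mb using inb c0a by simp
        have "spencer v {c0, a, b} (dec c0 mu) k = 0" using cl by simp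
        then have "v {a, b} ((dec c0 mu)(c0 := Suc (dec c0 mu c0))) k
            - v {c0, b} ((dec c0 mu)(a := Suc ((dec c0 mu) a))) k
            + v {c0, a} ((dec c0 mu)(b := Suc ((dec c0 mu) b))) k = 0"
          using spencer_3[OF c0a ab, of v "dec c0 mu" k] by simp
        moreover have "(dec c0 mu)(c0 := Suc (dec c0 mu c0)) = mu" by (rule sh_dec_eq[of mu c0, OF pc0])
        moreover have "(dec c0 mu)(a := Suc ((dec c0 mu) a)) = dec c0 (mu(a := Suc (mu a)))"
          by (rule sh_dec_comm) (use c0a in simp)
        moreover have "(dec c0 mu)(b := Suc ((dec c0 mu) b)) = dec c0 (mu(b := Suc (mu b)))"
          by (rule sh_dec_comm) (use c0a ab in simp)
        ultimately have E: "v {a, b} mu k - v {c0, b} (dec c0 (mu(a := Suc (mu a)))) k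
            + v {c0, a} (dec c0 (mu(b := Suc (mu b)))) k = 0" by (simp only:)
        define P where "P = v {c0, b} (dec c0 (mu(a := Suc (mu a)))) k"
        define Q where "Q = v {c0, a} (dec c0 (mu(b := Suc (mu b)))) k"
        have E2: "v {a, b} mu k - P + Q = 0" using E unfolding P_def Q_def .
        have "spencer u J mu k = P - Q" unfolding sp ub ua P_def Q_def ..
        also have "\<dots> = v {a, b} mu k" using E2 by (simp add: algebra_simps eq_neg_iff_add_eq_0)
        finally show ?thesis using J by simp
      next
        case False
        have ma: "msupp (mu(a := Suc (mu a))) = a"
          by (rule msupp_eq) (use False in auto)
        have ub: "u {b} (mu(a := Suc (mu a))) k = v {a, b} mu k"
          unfolding uval ma using ina ab by (simp add: dec_sh)
        have "\<not> msupp (mu(b := Suc (mu b))) < a"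
        proof
          assume lt: "msupp (mu(b := Suc (mu b))) < a"
          have "0 < (mu(b := Suc (mu b))) (msupp (mu(b := Suc (mu b))))"
            by (rule msupp_pos[of _ b]) simp
          moreover have "msupp (mu(b := Suc (mu b))) \<noteq> b" using lt ab by simp
          ultimately show False using lt False by auto
        qed
        then have ua: "u {a} (mu(b := Suc (mu b))) k = 0" unfolding uval by simp
        show ?thesis using sp ub ua J by simp
      qed
    next
      case False
      have vz: "v J mu k = 0"
      proof (cases "b < n")
        case True then have "mu \<notin> mi n p" using False by simp
        then show ?thesis using v by (simp add: WSE_def)
      next
        case False then have "\<not> J \<subseteq> {..<n}" using J by auto
        then show ?thesis using v by (simp add: WSE_def)
      qed
      have z1: "u {b} (mu(a := Suc (mu a))) k = 0"
      proof (rule ccontr)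
        assume "u {b} (mu(a := Suc (mu a))) k \<noteq> 0"
        from unz[OF this] have "b < n" "mu(a := Suc (mu a)) \<in> mi n (Suc p)" by auto
        then show False using False mi_sh by simp
      qed
      have z2: "u {a} (mu(b := Suc (mu b))) k = 0"
      proof (rule ccontr)
        assume "u {a} (mu(b := Suc (mu b))) k \<noteq> 0"
        from unz[OF this] have "mu(b := Suc (mu b)) \<in> mi n (Suc p)" by auto
        then show False using False mi_sh by simp
      qed
      show ?thesis using sp z1 z2 vz by simp
    qed
  next
    case False
    have "spencer u J mu k = 0"
    proof (rule spencer_zero_card[where j=1])
      fix I nu k' assume "u I nu k' \<noteq> 0"
      then obtain b where "I = {b}" using unz by blast
      then show "finite I \<and> card I = 1" by simp
    next
      show "\<not> (finite J \<and> card J = Suc 1)" using False by (simp add: numeral_2_eq_2)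
    qed
    moreover have "v J mu k = 0"
    proof -
      have "\<not> (J \<subseteq> {..<n} \<and> card J = 2)" using False finite_subset by (metis finite_lessThan)
      then show ?thesis using v by (simp add: WSE_def)
    qed
    ultimately show ?thesis by simp
  qed
  then have "spencer u = v" by (intro ext)
  then show ?thesis using uW by blast
qed



lemma poincare12:
  assumes "j = 1 \<or> j = 2" "u \<in> WSE n m j p" "spencer u = (\<lambda>_ _ _. 0)"
  shows "\<exists>z\<in>WSE n m (j - 1) (Suc p). spencer z = u"
  using assms poincare1[of u n m p] poincare2[of u n m p] by auto

lemma det_sh:
  assumes "x \<in> SE n m (Suc p)" "y \<in> SE n m (Suc p)"
    and "\<And>i. i < n \<Longrightarrow> (\<lambda>mu k. x (mu(i := Suc (mu i))) k) = (\<lambda>mu k. y (mu(i := Suc (mu i))) k)"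
  shows "x = y"
proof (intro ext)
  fix rho k
  show "x rho k = y rho k"
  proof (cases "rho \<in> mi n (Suc p)")
    case True
    then obtain c where c: "c < n" "0 < rho c" using mi_exists_pos by blast
    have "x ((dec c rho)(c := Suc (dec c rho c))) k = y ((dec c rho)(c := Suc (dec c rho c))) k"
      using fun_cong[OF fun_cong[OF assms(3)[OF c(1)], of "dec c rho"], of k] by simp
    then show ?thesis using sh_dec_eq[of rho c, OF c(2)] by simp
  next
    case False then show ?thesis using assms(1,2) by (simp add: SE_def)
  qed
qed

lemma shf_sig:
  assumes "nu \<in> mi n r"
  shows "(\<lambda>mu k. sigmat n m m0 q A (t + r) y (\<lambda>i. mu i + nu i) k) =
         sigmat n m m0 q A t (\<lambda>mu k. y (\<lambda>i. mu i + nu i) k)"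
proof (intro ext)
  fix rho tau
  have "(\<lambda>i. rho i + nu i) \<in> mi n (t + r) \<longleftrightarrow> rho \<in> mi n t"
    using mi_add[of rho n t nu r] mi_add_cancel[of rho nu n t r] assms by blast
  then show "sigmat n m m0 q A (t + r) y (\<lambda>i. rho i + nu i) tau = sigmat n m m0 q A t (\<lambda>mu k. y (\<lambda>i. mu i + nu i) k) rho tau"
    by (simp add: sig_SS SS_shf)
qed

lemma img_prol: "hsym n m m0 q A (t0 + r) \<subseteq> prol n m0 (hsym n m m0 q A t0) t0 r"
proof
  fix x assume "x \<in> hsym n m m0 q A (t0 + r)"
  then obtain y where y: "y \<in> SE n m (q + (t0 + r))" "x = sigmat n m m0 q A (t0 + r) y"
    by (auto simp: hsym_def)
  have "(\<lambda>mu k. x (\<lambda>i. mu i + nu i) k) \<in> hsym n m m0 q A t0" if nu: "nu \<in> mi n r" for nu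
  proof -
    have "(\<lambda>mu k. y (\<lambda>i. mu i + nu i) k) \<in> SE n m (q + t0)"
      using SE_shf[of y n m "q + t0" r nu] y(1) nu by (simp add: add.assoc)
    then show ?thesis unfolding y(2) shf_sig[OF nu] hsym_def by blast
  qed
  then show "x \<in> prol n m0 (hsym n m m0 q A t0) t0 r"
    using y sig_SE by (simp add: prol_def)
qed

lemma one_step:
  fixes A :: "nat \<Rightarrow> (nat \<Rightarrow> nat) \<Rightarrow> nat \<Rightarrow> 'a::field"
  assumes acyc: "k_acyclic n m (q + s) (prol n m (gsym n m m0 q A) q s) 2"
    and t: "t = s + Suc r'"
    and v: "v \<in> SE n m0 (Suc t)"
    and sh: "\<And>i. i < n \<Longrightarrow> (\<lambda>mu k. v (mu(i := Suc (mu i))) k) \<in> hsym n m m0 q A t"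
  shows "v \<in> hsym n m m0 q A (Suc t)"
proof -
  let ?g = "prol n m (gsym n m m0 q A) q s"
  let ?sig = "sigmat n m m0 q A"
  have ex: "\<exists>x. x \<in> SE n m (q + t) \<and> ?sig t x = (\<lambda>mu k. v (mu(i := Suc (mu i))) k)" if i: "i < n" for i
  proof -
    from sh[OF i] obtain x where "x \<in> SE n m (q + t)" "(\<lambda>mu k. v (mu(i := Suc (mu i))) k) = ?sig t x"
      unfolding hsym_def by (rule imageE)
    then show ?thesis by metis
  qed
  define uu where "uu = (\<lambda>i. SOME x. x \<in> SE n m (q + t) \<and> ?sig t x = (\<lambda>mu k. v (mu(i := Suc (mu i))) k))"
  have uu: "uu i \<in> SE n m (q + t) \<and> ?sig t (uu i) = (\<lambda>mu k. v (mu(i := Suc (mu i))) k)" if "i < n" for i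
    unfolding uu_def by (rule someI_ex[OF ex[OF that]])
  define U where "U = (\<lambda>I. if \<exists>i. I = {i} \<and> i < n then uu (the_elem I) else (\<lambda>_ _. 0))"
  define V0 where "V0 = (\<lambda>I::nat set. if I = {} then v else (\<lambda>_ _. 0))"
  have UW: "U \<in> WSE n m 1 (q + t)"
    unfolding WSE_def
  proof (intro CollectI allI impI)
    fix I mu k assume h: "\<not> (I \<subseteq> {..<n} \<and> card I = 1) \<or> mu \<notin> mi n (q + t) \<or> m \<le> k"
    show "U I mu k = 0"
    proof (cases "\<exists>i. I = {i} \<and> i < n")
      case True
      then obtain i where i: "I = {i}" "i < n" by blast
      then have "mu \<notin> mi n (q + t) \<or> m \<le> k" using h by simp
      then show ?thesis using uu[OF i(2)] i by (auto simp: U_def SE_def)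
    next
      case False then show ?thesis unfolding U_def if_not_P[OF False] by simp
    qed
  qed
  have Uall: "\<And>I. U I \<in> SE n m (q + t)" using UW by (rule WSE_comp)
  have sigU: "(\<lambda>I. ?sig t (U I)) = spencer V0"
  proof (intro ext)
    fix I mu tau
    show "?sig t (U I) mu tau = spencer V0 I mu tau"
    proof (cases "\<exists>i. I = {i}")
      case True
      then obtain i where i: "I = {i}" by blast
      show ?thesis
      proof (cases "i < n")
        case True
        then show ?thesis using uu[OF True] i by (simp add: U_def spencer_1 V0_def)
      next
        case False
        have "v (mu(i := Suc (mu i))) tau = 0" using v mi_sh_ge[of n i mu] False by (simp add: SE_def)
        then show ?thesis using i False by (simp add: U_def spencer_1 V0_def sig_zero)
      qed
    next
      case False
      have "spencer V0 I mu tau = 0"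
      proof (rule spencer_zero_card[where j=0])
        fix I' nu k' assume "V0 I' nu k' \<noteq> 0"
        then show "finite I' \<and> card I' = 0" by (simp add: V0_def split: if_splits)
      next
        show "\<not> (finite I \<and> card I = Suc 0)" by (simp only: card_1_singleton_iff) (use False in blast)
      qed
      then show ?thesis using False by (simp add: U_def sig_zero)
    qed
  qed
  define p0 where "p0 = s + r'"
  have tp: "t = Suc p0" using t p0_def by simp
  have Uall': "\<And>I. U I \<in> SE n m (q + Suc p0)" using Uall tp by simp
  define dU where "dU = spencer U"
  have sigU': "(\<lambda>I. ?sig (Suc p0) (U I)) = spencer V0" using sigU tp by simp
  have sigdU: "?sig p0 (dU J) = (\<lambda>_ _. 0)" for J
    unfolding dU_def sig_spencer[OF Uall'] sigU' spencer_spencer by simp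
  have dUW: "dU \<in> WSE n m 2 (q + s + r')"
    unfolding dU_def using spencer_WSE[of U n m 1 "q + s + r'"] UW t by (simp add: numeral_2_eq_2 add.assoc)
  have dUG: "dU \<in> WG n m ?g (q + s) r' 2"
    unfolding WG_def G2 using dUW sigdU WSE_comp[OF dUW] p0_def by (simp add: add.assoc)
  have spdU: "spencer dU = (\<lambda>_ _ _. 0)" unfolding dU_def by (rule spencer_spencer)
  have AC: "\<forall>r j w. 1 \<le> j \<and> j \<le> 2 \<and> w \<in> WG n m ?g (q + s) r j \<and> spencer w = (\<lambda>_ _ _. 0)
        \<longrightarrow> (\<exists>eta \<in> WG n m ?g (q + s) (Suc r) (j - 1). spencer eta = w)"
    using acyc unfolding k_acyclic_def .
  have "1 \<le> (2::nat) \<and> (2::nat) \<le> 2 \<and> dU \<in> WG n m ?g (q + s) r' 2 \<and> spencer dU = (\<lambda>_ _ _. 0)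
        \<longrightarrow> (\<exists>eta \<in> WG n m ?g (q + s) (Suc r') (2 - 1). spencer eta = dU)"
    using AC by blast
  moreover have "1 \<le> (2::nat) \<and> (2::nat) \<le> 2 \<and> dU \<in> WG n m ?g (q + s) r' 2 \<and> spencer dU = (\<lambda>_ _ _. 0)"
    using dUG spdU by simp
  ultimately have "\<exists>eta \<in> WG n m ?g (q + s) (Suc r') (2 - 1). spencer eta = dU"
    by (rule mp)
  then obtain Y where Y: "Y \<in> WG n m ?g (q + s) (Suc r') 1" "spencer Y = dU"
    by auto
  define Dif where "Dif = (\<lambda>I mu k. U I mu k - Y I mu k)"
  have YW: "Y \<in> WSE n m 1 (q + s + Suc r')" using Y(1) by (simp add: WG_def)
  have DifW: "Dif \<in> WSE n m 1 (q + s + Suc r')"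
    unfolding Dif_def by (rule WSE_diff) (use UW t YW in \<open>simp_all add: add.assoc\<close>)
  have "spencer Dif = (\<lambda>_ _ _. 0)"
    unfolding Dif_def spencer_diff using Y(2) dU_def by simp
  then obtain Z where Z: "Z \<in> WSE n m 0 (Suc (q + s + Suc r'))" "spencer Z = Dif"
    using poincare1[OF DifW] by auto
  have Zall: "\<And>I. Z I \<in> SE n m (q + Suc t)" using WSE_comp[OF Z(1)] t by (simp add: add.assoc)
  have sigY: "?sig t (Y {i}) = (\<lambda>_ _. 0)" if "i < n" for i
  proof -
    have "Y {i} \<in> prol n m ?g (q + s) (Suc r')" using Y(1) that by (simp add: WG_def)
    then show ?thesis unfolding G2 using t by simp
  qed
  have "v = ?sig (Suc t) (Z {})"
  proof (rule det_sh[OF v sig_SE])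
    fix i assume i: "i < n"
    have "(\<lambda>mu k. ?sig (Suc t) (Z {}) (mu(i := Suc (mu i))) k) = spencer (\<lambda>I. ?sig (Suc t) (Z I)) {i}"
      by (simp add: spencer_1 fun_eq_iff)
    also have "\<dots> = ?sig t (spencer Z {i})" using sig_spencer[of Z n m q t m0 A "{i}"] Zall by simp
    also have "\<dots> = ?sig t (Dif {i})" using Z(2) by simp
    also have "\<dots> = (\<lambda>mu k. v (mu(i := Suc (mu i))) k)"
      unfolding Dif_def sig_diff using sigY[OF i] uu[OF i] i by (simp add: U_def)
    finally show "(\<lambda>mu k. v (mu(i := Suc (mu i))) k) = (\<lambda>mu k. ?sig (Suc t) (Z {}) (mu(i := Suc (mu i))) k)"
      by simp
  qed
  then show ?thesis using Zall unfolding hsym_def by blast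
qed



lemma hprol:
  fixes A :: "nat \<Rightarrow> (nat \<Rightarrow> nat) \<Rightarrow> nat \<Rightarrow> 'a::field"
  assumes acyc: "k_acyclic n m (q + s) (prol n m (gsym n m m0 q A) q s) 2"
    and t0: "t0 = s + Suc a"
  shows "prol n m0 (hsym n m m0 q A t0) t0 r = hsym n m m0 q A (t0 + r)"
proof (rule equalityI)
  show "hsym n m m0 q A (t0 + r) \<subseteq> prol n m0 (hsym n m m0 q A t0) t0 r" by (rule img_prol)
  show "prol n m0 (hsym n m m0 q A t0) t0 r \<subseteq> hsym n m m0 q A (t0 + r)"
  proof (induction r)
    case 0
    show ?case
    proof
      fix x assume "x \<in> prol n m0 (hsym n m m0 q A t0) t0 0"
      then have "(\<lambda>mu k. x (\<lambda>i. mu i + (\<lambda>_. 0) i) k) \<in> hsym n m m0 q A t0"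
        by (simp add: prol_def mi0)
      then show "x \<in> hsym n m m0 q A (t0 + 0)" by simp
    qed
  next
    case (Suc r)
    show ?case
    proof
      fix x assume x: "x \<in> prol n m0 (hsym n m m0 q A t0) t0 (Suc r)"
      have xs: "x \<in> SE n m0 (Suc (t0 + r))" using x by (simp add: prol_def)
      have "(\<lambda>mu k. x (mu(i := Suc (mu i))) k) \<in> hsym n m m0 q A (t0 + r)" if i: "i < n" for i
      proof -
        have "(\<lambda>mu k. x (mu(i := Suc (mu i))) k) \<in> prol n m0 (hsym n m m0 q A t0) t0 r"
          unfolding prol_def
        proof (intro CollectI conjI ballI)
          show "(\<lambda>mu k. x (mu(i := Suc (mu i))) k) \<in> SE n m0 (t0 + r)" using SE_sh[OF xs] .
        next
          fix nu assume nu: "nu \<in> mi n r"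
          have eqsh: "\<And>mu. (\<lambda>j. mu j + nu j)(i := Suc (mu i + nu i)) = (\<lambda>j. mu j + (nu(i := Suc (nu i))) j)"
            by (auto simp: fun_eq_iff)
          have "nu(i := Suc (nu i)) \<in> mi n (Suc r)" using mi_sh nu i by simp
          then have "(\<lambda>mu k. x (\<lambda>j. mu j + (nu(i := Suc (nu i))) j) k) \<in> hsym n m m0 q A t0"
            using x unfolding prol_def by blast
          then show "(\<lambda>mu k. x ((\<lambda>j. mu j + nu j)(i := Suc (mu i + nu i))) k) \<in> hsym n m m0 q A t0"
            unfolding eqsh .
        qed
        then show ?thesis using Suc.IH by blast
      qed
      then have "x \<in> hsym n m m0 q A (Suc (t0 + r))"
        using one_step[OF acyc, of "t0 + r" "a + r" x] t0 xs by simp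
      then show "x \<in> hsym n m m0 q A (t0 + Suc r)" by simp
    qed
  qed
qed



theorem corollary3p11:
  fixes A :: "nat \<Rightarrow> (nat \<Rightarrow> nat) \<Rightarrow> nat \<Rightarrow> 'a::field"
    and n m m0 q s s' :: nat
  assumes "k_acyclic n m (q + s) (prol n m (gsym n m m0 q A) q s) 2"
    and "k_acyclic n m (q + s + s') (prol n m (gsym n m m0 q A) q (s + s')) 3"
  shows "k_acyclic n m0 (s + s' + 1) (hsym n m m0 q A (s + s' + 1)) 2"
  unfolding k_acyclic_def
proof (intro allI impI)
  fix r j w
  assume h: "1 \<le> j \<and> j \<le> 2 \<and> w \<in> WG n m0 (hsym n m m0 q A (s + s' + 1)) (s + s' + 1) r j \<and>
             spencer w = (\<lambda>_ _ _. 0)"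
  let ?t0 = "s + s' + 1"
  let ?g = "prol n m (gsym n m m0 q A) q (s + s')"
  let ?sig = "sigmat n m m0 q A"
  define t where "t = s + s' + 1 + r"
  have hp: "prol n m0 (hsym n m m0 q A ?t0) ?t0 r' = hsym n m m0 q A (?t0 + r')" for r'
    by (rule hprol[OF assms(1), of _ s']) simp
  have G2': "prol n m ?g (q + s + s') r' = {x \<in> SE n m (q + s + s' + r'). ?sig (s + s' + r') x = (\<lambda>_ _. 0)}" for r'
    using G2[of n m m0 q A "s + s'" r'] by (simp add: add.assoc)
  have j12: "j = 1 \<or> j = 2" using h by auto
  have wW: "w \<in> WSE n m0 j (?t0 + r)" using h by (simp add: WG_def)
  have wI: "w I \<in> hsym n m m0 q A t" if "I \<subseteq> {..<n} \<and> card I = j" for I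
    using h that hp[of r] by (simp add: WG_def t_def)
  have ex: "\<exists>x. x \<in> SE n m (q + t) \<and> ?sig t x = w I" if "I \<subseteq> {..<n} \<and> card I = j" for I
  proof -
    from wI[OF that] obtain x where "x \<in> SE n m (q + t)" "w I = ?sig t x"
      unfolding hsym_def by (rule imageE)
    then show ?thesis by metis
  qed
  define u where "u = (\<lambda>I. if I \<subseteq> {..<n} \<and> card I = j then (SOME x. x \<in> SE n m (q + t) \<and> ?sig t x = w I)
                         else (\<lambda>_ _. 0))"
  have uprop: "u I \<in> SE n m (q + t) \<and> ?sig t (u I) = w I" if v: "I \<subseteq> {..<n} \<and> card I = j" for I
    unfolding u_def if_P[OF v] by (rule someI_ex[OF ex[OF v]])
  have uW: "u \<in> WSE n m j (q + t)"
    unfolding WSE_def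
  proof (intro CollectI allI impI)
    fix I mu k assume hh: "\<not> (I \<subseteq> {..<n} \<and> card I = j) \<or> mu \<notin> mi n (q + t) \<or> m \<le> k"
    show "u I mu k = 0"
    proof (cases "I \<subseteq> {..<n} \<and> card I = j")
      case True
      then show ?thesis using uprop[OF True] hh by (auto simp: SE_def)
    next
      case False then show ?thesis unfolding u_def if_not_P[OF False] by simp
    qed
  qed
  have sigu: "(\<lambda>I. ?sig t (u I)) = w"
  proof (intro ext)
    fix I mu k
    show "?sig t (u I) mu k = w I mu k"
    proof (cases "I \<subseteq> {..<n} \<and> card I = j")
      case True then show ?thesis using uprop[OF True] by simp
    next
      case False
      have "w I mu k = 0" using wW False unfolding WSE_def by blast
      then show ?thesis unfolding u_def if_not_P[OF False] sig_zero by simp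
    qed
  qed
  define p1 where "p1 = s + s' + r"
  have tp: "t = Suc p1" unfolding t_def p1_def by simp
  have uall: "\<And>I. u I \<in> SE n m (q + Suc p1)" using WSE_comp[OF uW] tp by simp
  define du where "du = spencer u"
  have duW: "du \<in> WSE n m (Suc j) (q + s + s' + r)"
    unfolding du_def by (rule spencer_WSE) (use uW tp p1_def in \<open>simp add: add.assoc\<close>)
  have sigu': "(\<lambda>I. ?sig (Suc p1) (u I)) = w" using sigu tp by simp
  have sigdu: "?sig (s + s' + r) (du J) = (\<lambda>_ _. 0)" for J
    unfolding du_def p1_def[symmetric] sig_spencer[OF uall] sigu' using h by simp
  have duG: "du \<in> WG n m ?g (q + s + s') r (Suc j)"
    unfolding WG_def G2' using duW sigdu WSE_comp[OF duW] by simp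
  have spdu: "spencer du = (\<lambda>_ _ _. 0)" unfolding du_def by (rule spencer_spencer)
  have AC: "\<forall>r j w. 1 \<le> j \<and> j \<le> 3 \<and> w \<in> WG n m ?g (q + s + s') r j \<and> spencer w = (\<lambda>_ _ _. 0)
        \<longrightarrow> (\<exists>eta \<in> WG n m ?g (q + s + s') (Suc r) (j - 1). spencer eta = w)"
    using assms(2) unfolding k_acyclic_def .
  have "1 \<le> Suc j \<and> Suc j \<le> 3 \<and> du \<in> WG n m ?g (q + s + s') r (Suc j) \<and> spencer du = (\<lambda>_ _ _. 0)
        \<longrightarrow> (\<exists>eta \<in> WG n m ?g (q + s + s') (Suc r) (Suc j - 1). spencer eta = du)"
    using AC by blast
  moreover have "1 \<le> Suc j \<and> Suc j \<le> 3 \<and> du \<in> WG n m ?g (q + s + s') r (Suc j) \<and> spencer du = (\<lambda>_ _ _. 0)"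
    using duG spdu j12 by auto
  ultimately have "\<exists>eta \<in> WG n m ?g (q + s + s') (Suc r) (Suc j - 1). spencer eta = du"
    by (rule mp)
  then obtain Y where Y: "Y \<in> WG n m ?g (q + s + s') (Suc r) j" "spencer Y = du" by auto
  have YW: "Y \<in> WSE n m j (q + t)" using Y(1) by (simp add: WG_def t_def add.assoc)
  define Dif where "Dif = (\<lambda>I mu k. u I mu k - Y I mu k)"
  have DifW: "Dif \<in> WSE n m j (q + t)" unfolding Dif_def by (rule WSE_diff[OF uW YW])
  have "spencer Dif = (\<lambda>_ _ _. 0)" unfolding Dif_def spencer_diff using Y(2) du_def by simp
  then obtain Z where Z: "Z \<in> WSE n m (j - 1) (Suc (q + t))" "spencer Z = Dif"
    using poincare12[OF j12 DifW] by auto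
  have ZI: "\<And>I. Z I \<in> SE n m (q + Suc t)" using WSE_comp[OF Z(1)] by simp
  define eta where "eta = (\<lambda>I. ?sig (Suc t) (Z I))"
  have sigY: "?sig t (Y J) = (\<lambda>_ _. 0)" for J
  proof (cases "J \<subseteq> {..<n} \<and> card J = j")
    case True
    then have "Y J \<in> prol n m ?g (q + s + s') (Suc r)" using Y(1) by (simp add: WG_def)
    then show ?thesis unfolding G2' t_def by simp
  next
    case False
    have "Y J = (\<lambda>_ _. 0)" using YW False unfolding WSE_def by blast
    then show ?thesis by (simp add: sig_zero)
  qed
  have etaW: "eta \<in> WSE n m0 (j - 1) (?t0 + Suc r)"
    unfolding WSE_def
  proof (intro CollectI allI impI)
    fix I mu k assume hh: "\<not> (I \<subseteq> {..<n} \<and> card I = j - 1) \<or> mu \<notin> mi n (?t0 + Suc r) \<or> m0 \<le> k"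
    show "eta I mu k = 0"
    proof (cases "I \<subseteq> {..<n} \<and> card I = j - 1")
      case True
      then have "mu \<notin> mi n (Suc t) \<or> m0 \<le> k" using hh by (simp add: t_def)
      then show ?thesis unfolding eta_def by (auto simp: sig_SS)
    next
      case False
      have "Z I = (\<lambda>_ _. 0)" using Z(1) False unfolding WSE_def by blast
      then show ?thesis unfolding eta_def by (simp add: sig_zero)
    qed
  qed
  have etaG: "eta \<in> WG n m0 (hsym n m m0 q A ?t0) ?t0 (Suc r) (j - 1)"
    unfolding WG_def hp
  proof (intro CollectI conjI allI impI etaW)
    fix I
    have "Z I \<in> SE n m (q + (?t0 + Suc r))" using ZI by (simp add: t_def)
    then have "?sig (?t0 + Suc r) (Z I) \<in> hsym n m m0 q A (?t0 + Suc r)" unfolding hsym_def by blast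
    then show "eta I \<in> hsym n m m0 q A (?t0 + Suc r)" unfolding eta_def by (simp add: t_def)
  qed
  have "spencer eta = w"
  proof (intro ext)
    fix J mu k
    have "spencer eta J = ?sig t (spencer Z J)" unfolding eta_def using sig_spencer[of Z n m q t m0 A J] ZI by simp
    also have "\<dots> = ?sig t (Dif J)" using Z(2) by simp
    also have "\<dots> = w J" unfolding Dif_def sig_diff using sigY[of J] fun_cong[OF sigu, of J] by simp
    finally show "spencer eta J mu k = w J mu k" by simp
  qed
  then show "\<exists>eta\<in>WG n m0 (hsym n m m0 q A ?t0) ?t0 (Suc r) (j - 1). spencer eta = w"
    using etaG by blast
qed

end
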